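(* For $\tau,\kappa\in\mathbb{R}$ and integer $n\ge0$, let $$\mu_{2n}(\tau;\kappa)=\int_{-\infty}^{\infty}x^{2n}\exp\{-(x^6-\tau x^4+\kappa\tau^2x^2)\}\,dx.$$ Then $$\mu_{2n}(\tau;\kappa)=\tfrac13\sum_{j=0}^{\infty}\left\{\frac{\Gamma\left(\tfrac23j+\tfrac13n+\tfrac16\right)}{\left(\tfrac12\right)_j}\tau^jL_j^{(-1/2)}(\zeta)-\kappa\frac{\Gamma\left(\tfrac23j+\tfrac13n+\tfrac12\right)}{\left(\tfrac32\right)_j}\tau^{j+2}L_j^{(1/2)}(\zeta)\right\},$$ where $\zeta=-\tfrac14\kappa^2\tau^3$.
   Context: $L_j^{(\alpha)}$ denotes the (standard, generalised) Laguerre polynomial of degree $j$ and parameter $\alpha$. $(a)_j$ denotes the Pochhammer symbol. *)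

theory Defs
  imports "HOL-Analysis.Analysis"
begin

definition laguerre :: "nat \<Rightarrow> real \<Rightarrow> real \<Rightarrow> real" where
  "laguerre j \<alpha> x = (\<Sum>k\<le>j. (-1)^k * ((real j + \<alpha>) gchoose (j - k)) * x^k / fact k)"

definition mu :: "nat \<Rightarrow> real \<Rightarrow> real \<Rightarrow> real" where
  "mu n \<tau> \<kappa> = integral UNIV (\<lambda>x::real. x^(2*n) * exp (-(x^6 - \<tau>*x^4 + \<kappa>*\<tau>^2*x^2)))"

end

theory Submission
  imports Defs "HOL-Real_Asymp.Real_Asymp"
begin


definition PP :: "real \<Rightarrow> real \<Rightarrow> nat \<Rightarrow> real" where
  "PP t k j = (\<Sum>c\<le>j. t^(j+3*c) * k^(2*c) / (fact (j-c) * fact (2*c)))"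
definition QQ :: "real \<Rightarrow> real \<Rightarrow> nat \<Rightarrow> real" where
  "QQ t k j = - (\<Sum>c\<le>j. t^(j+3*c+2) * k^(2*c+1) / (fact (j-c) * fact (2*c+1)))"

lemma fact_double_half: "(fact (2*c) :: real) = 4^c * pochhammer (1/2) c * fact c"
proof -
  have "pochhammer (2 * (1/2::real)) (2*c) = of_nat (2^(2*c)) * pochhammer (1/2) c * pochhammer (1/2+1/2) c"
    by (rule pochhammer_double)
  then show ?thesis by (simp add: pochhammer_fact power_mult)
qed

lemma poch2: "pochhammer (2::real) m = fact (Suc m)"
proof -
  have "pochhammer (1::real) (Suc m) = 1 * pochhammer 2 m"
    by (simp add: pochhammer_rec)
  then show ?thesis by (simp add: pochhammer_fact)
qed

lemma fact_double_half': "(fact (2*c+1) :: real) = 4^c * pochhammer (3/2) c * fact c"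
proof -
  have "pochhammer (2 * (1::real)) (2*c) = of_nat (2^(2*c)) * pochhammer 1 c * pochhammer (1+1/2) c"
    by (rule pochhammer_double)
  then show ?thesis by (simp add: pochhammer_fact[symmetric] power_mult poch2)
qed

lemma lag1: "t^j * laguerre j (-1/2) (-(1/4) * k^2 * t^3) / pochhammer (1/2) j = PP t k j"
proof -
  have "t^j * laguerre j (-1/2) (-(1/4) * k^2 * t^3) / pochhammer (1/2) j
     = (\<Sum>c\<le>j. t^j * ((-1)^c * ((real j + -1/2) gchoose (j - c)) * (-(1/4) * k^2 * t^3)^c / fact c) / pochhammer (1/2) j)"
    unfolding laguerre_def by (simp add: sum_distrib_left sum_divide_distrib)
  also have "\<dots> = PP t k j" unfolding PP_def
  proof (rule sum.cong[OF refl])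
    fix c assume "c \<in> {..j}"
    hence cj: "c \<le> j" by simp
    have g: "(real j + -1/2) gchoose (j - c) = pochhammer (real c + 1/2) (j-c) / fact (j-c)"
      using cj by (simp add: gbinomial_pochhammer' of_nat_diff algebra_simps)
    have p: "pochhammer (1/2::real) j = pochhammer (1/2) c * pochhammer (1/2 + real c) (j - c)"
      using pochhammer_product[OF cj, of "1/2::real"] by simp
    have pos1: "pochhammer (1/2::real) c > 0" by (rule pochhammer_pos) simp
    have pos2: "pochhammer (1/2 + real c) (j-c) > 0" by (rule pochhammer_pos) simp
    have z: "(-(1/4) * k^2 * t^3)^c = (-1)^c * (k^(2*c) * t^(3*c)) / 4^c"
    proof -
      have "-(1/4) * k^2 * t^3 = (-1) * ((k^2 * t^3) / 4)" by simp
      also have "\<dots>^c = (-1)^c * ((k^2)^c * (t^3)^c) / 4^c"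
        by (simp only: power_mult_distrib power_divide times_divide_eq_right)
      finally show ?thesis by (simp add: power_mult[symmetric] mult.commute)
    qed
    show "t^j * ((-1)^c * ((real j + -1/2) gchoose (j - c)) * (-(1/4) * k^2 * t^3)^c / fact c) / pochhammer (1/2) j
        = t^(j+3*c) * k^(2*c) / (fact (j-c) * fact (2*c))"
      unfolding g p z fact_double_half using pos1 pos2
      by (simp add: field_simps power_add add.commute flip: power_mult_distrib)
  qed
  finally show ?thesis .
qed


lemma lag2: "- k * t^(j+2) * laguerre j (1/2) (-(1/4) * k^2 * t^3) / pochhammer (3/2) j = QQ t k j"
proof -
  have "- k * t^(j+2) * laguerre j (1/2) (-(1/4) * k^2 * t^3) / pochhammer (3/2) j
     = - (\<Sum>c\<le>j. k * t^(j+2) * ((-1)^c * ((real j + 1/2) gchoose (j - c)) * (-(1/4) * k^2 * t^3)^c / fact c) / pochhammer (3/2) j)"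
    unfolding laguerre_def by (simp add: sum_distrib_left sum_divide_distrib sum_negf)
  also have "\<dots> = QQ t k j" unfolding QQ_def
  proof (rule arg_cong[where f=uminus], rule sum.cong[OF refl])
    fix c assume "c \<in> {..j}"
    hence cj: "c \<le> j" by simp
    have g: "(real j + 1/2) gchoose (j - c) = pochhammer (3/2 + real c) (j-c) / fact (j-c)"
      using cj by (simp add: gbinomial_pochhammer' of_nat_diff algebra_simps)
    have p: "pochhammer (3/2::real) j = pochhammer (3/2) c * pochhammer (3/2 + real c) (j - c)"
      using pochhammer_product[OF cj, of "3/2::real"] by simp
    have pos1: "pochhammer (3/2::real) c > 0" by (rule pochhammer_pos) simp
    have pos2: "pochhammer (3/2 + real c) (j-c) > 0" by (rule pochhammer_pos) simp
    have z: "(-(1/4) * k^2 * t^3)^c = (-1)^c * (k^(2*c) * t^(3*c)) / 4^c"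
    proof -
      have "-(1/4) * k^2 * t^3 = (-1) * ((k^2 * t^3) / 4)" by simp
      also have "\<dots>^c = (-1)^c * ((k^2)^c * (t^3)^c) / 4^c"
        by (simp only: power_mult_distrib power_divide times_divide_eq_right)
      finally show ?thesis by (simp add: power_mult[symmetric] mult.commute)
    qed
    show "k * t^(j+2) * ((-1)^c * ((real j + 1/2) gchoose (j - c)) * (-(1/4) * k^2 * t^3)^c / fact c) / pochhammer (3/2) j
        = t^(j+3*c+2) * k^(2*c+1) / (fact (j-c) * fact (2*c+1))"
      unfolding g p z fact_double_half' using pos1 pos2
      by (simp add: field_simps power_add add.commute flip: power_mult_distrib)
  qed
  finally show ?thesis .
qed



lemma gamma_set_integrable:
  fixes s :: real assumes s: "s > 0"
  shows "set_integrable lborel {0<..} (\<lambda>t. t powr (s - 1) / exp t)"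
    and "(LINT t:{0<..}|lborel. t powr (s - 1) / exp t) = Gamma s"
proof -
  have G: "((\<lambda>t. t powr (s - 1) / exp t) has_integral Gamma s) {0..}"
    by (rule Gamma_integral_real[OF s])
  have G': "((\<lambda>t. t powr (s - 1) / exp t) has_integral Gamma s) {0<..}"
  proof -
    have "{x \<in> {0::real..} - {0<..}. x powr (s - 1) / exp x \<noteq> 0} \<subseteq> {0}" by auto
    hence "negligible {x \<in> {0::real..} - {0<..}. x powr (s - 1) / exp x \<noteq> 0}"
      by (rule negligible_subset[rotated]) simp
    moreover have "negligible {x \<in> {0::real<..} - {0..}. x powr (s - 1) / exp x \<noteq> 0}"
      by (rule negligible_subset[of "{}"]) auto
    ultimately have "((\<lambda>t. t powr (s - 1) / exp t) has_integral Gamma s) {0..} \<longleftrightarrow> ((\<lambda>t. t powr (s - 1) / exp t) has_integral Gamma s) {0<..}"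
      by (rule has_integral_spike_set_eq)
    with G show ?thesis by simp
  qed
  have "(\<lambda>t. t powr (s - 1) / exp t) absolutely_integrable_on {0<..}"
    using G' by (intro nonnegative_absolutely_integrable_1) auto
  hence "integrable lebesgue (\<lambda>t. indicator {0<..} t *\<^sub>R (t powr (s - 1) / exp t))"
    unfolding set_integrable_def .
  thus I: "set_integrable lborel {0<..} (\<lambda>t. t powr (s - 1) / exp t)"
    unfolding set_integrable_def by (subst (asm) integrable_completion) auto
  show "(LINT t:{0<..}|lborel. t powr (s - 1) / exp t) = Gamma s"
    using set_borel_integral_eq_integral(2)[OF I] G' by (simp add: integral_unique)
qed


lemma mom_half:
  fixes k :: nat
  shows "set_integrable lborel (einterval 0 \<infinity>) (\<lambda>x::real. x^(2*k) * exp (-(x^6)))"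
    and "(LBINT x=0..\<infinity>. x^(2*k) * exp (-(x^6))) = Gamma ((2*real k+1)/6) / 6"
proof -
  define s where "s = (2*real k+1)/6"
  have s: "s > 0" unfolding s_def by simp
  define f where "f = (\<lambda>x::real. x^(2*k) * exp (-(x^6)))"
  define g where "g = (\<lambda>t::real. t powr (1/6))"
  define g' where "g' = (\<lambda>t::real. 1/6 * t powr (1/6 - 1))"
  have fg: "f (g t) * g' t = 1/6 * (t powr (s - 1) / exp t)" if "t > 0" for t
  proof -
    have "(t powr (1/6))^(2*k) = t powr (real k / 3)"
      using that by (simp add: powr_realpow[symmetric] powr_powr)
    moreover have "(t powr (1/6))^6 = t"
      using that by (simp add: powr_realpow[symmetric] powr_powr)
    moreover have "t powr (real k / 3) * t powr (1/6 - 1) = t powr (s - 1)"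
      using that by (simp add: powr_add[symmetric] s_def field_simps)
    ultimately show ?thesis unfolding f_def g_def g'_def
      by (simp add: exp_minus field_simps)
  qed
  have I1: "set_integrable lborel (einterval 0 \<infinity>) (\<lambda>t. f (g t) * g' t)"
  proof -
    have "set_integrable lborel {0<..} (\<lambda>t. 1/6 * (t powr (s - 1) / exp t))"
      using gamma_set_integrable(1)[OF s] by (rule set_integrable_mult_right)
    moreover have "(\<lambda>x. indicat_real {0<..} x *\<^sub>R (f (g x) * g' x)) = (\<lambda>x. indicat_real {0<..} x *\<^sub>R (1/6 * (x powr (s - 1) / exp x)))"
      by (auto simp: fg indicator_def)
    moreover have "einterval 0 \<infinity> = {0::real<..}" by (simp add: zero_ereal_def)
    ultimately show ?thesis unfolding set_integrable_def by simp
  qed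
  have V: "(LBINT x=0..\<infinity>. f (g x) * g' x) = Gamma s / 6"
  proof -
    have "(LBINT x=0..\<infinity>. f (g x) * g' x) = (LINT t:{0<..}|lborel. 1/6 * (t powr (s - 1) / exp t))"
      unfolding interval_lebesgue_integral_def set_lebesgue_integral_def
      by (auto simp: zero_ereal_def fg indicator_def intro!: Bochner_Integration.integral_cong)
    also have "\<dots> = 1/6 * Gamma s"
      unfolding set_integral_mult_right using gamma_set_integrable(2)[OF s] by simp
    finally show ?thesis by simp
  qed
  have L1: "((\<lambda>t::real. t powr (1/6)) \<longlongrightarrow> 0) (at_right 0)" by real_asymp
  have L2: "filterlim (\<lambda>t::real. t powr (1/6)) at_top at_top" by real_asymp
  have sub: "set_integrable lborel (einterval 0 \<infinity>) f \<and> (LBINT x=0..\<infinity>. f x) = (LBINT x=0..\<infinity>. f (g x) * g' x)"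
  proof (rule conjI; rule interval_integral_substitution_nonneg[of 0 "\<infinity>" g g' f 0 "\<infinity>"])
    show "(0::ereal) < \<infinity>" by simp
  qed (use I1 L1 L2 in \<open>simp_all add: g_def ereal_tendsto_simps zero_ereal_def\<close>;
       auto simp: f_def g'_def intro!: derivative_eq_intros continuous_intros)+
  show "set_integrable lborel (einterval 0 \<infinity>) (\<lambda>x::real. x^(2*k) * exp (-(x^6)))"
    using sub unfolding f_def by blast
  show "(LBINT x=0..\<infinity>. x^(2*k) * exp (-(x^6))) = Gamma ((2*real k+1)/6) / 6"
    using sub V unfolding f_def s_def by simp
qed


lemma mom:
  fixes k :: nat
  shows "integrable lborel (\<lambda>x::real. x^(2*k) * exp (-(x^6)))"
    and "(\<integral>x. x^(2*k) * exp (-(x^6)) \<partial>lborel) = Gamma ((2*real k+1)/6) / 3"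
proof -
  define F where "F = (\<lambda>x::real. x^(2*k) * exp (-(x^6)))"
  define p where "p = (\<lambda>x::real. indicator {0<..} x * F x)"
  have e: "einterval 0 \<infinity> = {0::real<..}" by (simp add: zero_ereal_def)
  have ip: "integrable lborel p"
    using mom_half(1)[of k] unfolding set_integrable_def p_def F_def e by simp
  have vp: "integral\<^sup>L lborel p = Gamma ((2*real k+1)/6) / 6"
    using mom_half(2)[of k] unfolding interval_lebesgue_integral_def set_lebesgue_integral_def p_def F_def e
    by (simp add: zero_ereal_def)
  have ipm: "integrable lborel (\<lambda>x. p (0 + (-1) * x))"
    using ip lborel_integrable_real_affine_iff[of "-1" p 0] by simp
  have vpm: "integral\<^sup>L lborel (\<lambda>x. p (0 + (-1) * x)) = integral\<^sup>L lborel p"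
    using lborel_integral_real_affine[of "-1" p 0] by simp
  have mp[measurable]: "p \<in> borel_measurable borel" unfolding p_def F_def by measurable
  have ae: "AE x in lborel. F x = p x + p (0 + (-1) * x)"
    using AE_lborel_singleton[of 0]
    by eventually_elim (auto simp: p_def F_def indicator_def)
  have mF: "F \<in> borel_measurable lborel" unfolding F_def by measurable
  have i2: "integrable lborel (\<lambda>x. p x + p (0 + (-1) * x))" using ip ipm by simp
  show "integrable lborel (\<lambda>x::real. x^(2*k) * exp (-(x^6)))"
    using integrable_cong_AE[OF mF _ ae] i2 unfolding F_def by simp
  have "integral\<^sup>L lborel F = integral\<^sup>L lborel (\<lambda>x. p x + p (0 + (-1) * x))"
    by (rule integral_cong_AE[OF mF _ ae]) simp
  also have "\<dots> = Gamma ((2*real k+1)/6) / 3" using ip ipm vp vpm by simp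
  finally show "(\<integral>x. x^(2*k) * exp (-(x^6)) \<partial>lborel) = Gamma ((2*real k+1)/6) / 3"
    unfolding F_def .
qed



definition GG :: "nat \<Rightarrow> real \<Rightarrow> real \<Rightarrow> nat \<Rightarrow> real \<Rightarrow> real" where
  "GG n t k j x = PP t k j * (x^(2*(n+2*j)) * exp (-(x^6))) + QQ t k j * (x^(2*(n+2*j+1)) * exp (-(x^6)))"

lemma exp_pair_sums:
  fixes v :: real
  shows "(\<lambda>c. v^(2*c) / fact (2*c) + v^(2*c+1) / fact (2*c+1)) sums exp v"
proof -
  have "(\<lambda>c. sum (\<lambda>m. v^m /\<^sub>R fact m) {c*2..<c*2+2}) sums exp v"
    by (rule sums_group[OF exp_converges]) simp
  moreover have "sum (\<lambda>m. v^m /\<^sub>R fact m) {c*2..<c*2+2} = v^(2*c) / fact (2*c) + v^(2*c+1) / fact (2*c+1)" for c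
  proof -
    have "{c*2..<c*2+2} = {2*c, 2*c+1}" by auto
    thus ?thesis by (simp add: divide_inverse mult.commute)
  qed
  ultimately show ?thesis by simp
qed

lemma alg_aux:
  fixes K T4 X4c F0 F1 k t x Td X4d D X E :: real
  assumes "F0 > 0" "D > 0" "F1 > 0"
  shows "(K*T4*X4c/F0 + (-(K*k*(T4*t^2)*(X4c*x^2)))/F1) * (Td*X4d/D) * (X*E)
     = Td*T4*K/(D*F0) * (X*X4c*X4d*E) - Td*T4*t^2*(K*k)/(D*F1) * (X*X4c*X4d*x^2*E)"
  using assms by (simp add: field_simps)

lemma term_eq:
  fixes t k x :: real
  assumes cj: "c \<le> j"
  shows "((-(k*t^2*x^2))^(2*c) / fact (2*c) + (-(k*t^2*x^2))^(2*c+1) / fact (2*c+1)) * ((t*x^4)^(j-c) / fact (j-c)) * (x^(2*n) * exp (-(x^6)))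
   = t^(j+3*c) * k^(2*c) / (fact (j-c) * fact (2*c)) * (x^(2*(n+2*j)) * exp (-(x^6)))
     - t^(j+3*c+2) * k^(2*c+1) / (fact (j-c) * fact (2*c+1)) * (x^(2*(n+2*j+1)) * exp (-(x^6)))"
proof -
  obtain d where j: "j = c + d" using cj le_Suc_ex by blast
  have e1: "(-(k*t^2*x^2))^(2*c) = k^(2*c) * t^(4*c) * x^(4*c)"
    by (simp add: power_mult_distrib power_mult[symmetric] mult.commute)
  have "(-(k*t^2*x^2))^(2*c+1) = (-(k*t^2*x^2))^(2*c) * (-(k*t^2*x^2))" by simp
  also have "\<dots> = -(k^(2*c+1) * t^(4*c+2) * x^(4*c+2))" unfolding e1
    by (simp add: power_add power2_eq_square)
  finally have e2: "(-(k*t^2*x^2))^(2*c+1) = -(k^(2*c+1) * t^(4*c+2) * x^(4*c+2))" .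
  have "(t*x^4)^d = t^d * x^(4*d)"
    by (simp add: power_mult_distrib power_mult[symmetric] mult.commute)
  have p1: "x^(2*(n+2*(c+d))) = x^(2*n) * x^(4*c) * x^(4*d)"
    by (simp add: power_add[symmetric] algebra_simps)
  have p2: "x^(2*(n+2*(c+d)+1)) = x^(2*n) * x^(4*c) * x^(4*d) * x^2"
    by (simp add: power_add[symmetric] algebra_simps)
  have p3: "t^(c+d+3*c) = t^d * t^(4*c)" by (simp add: power_add[symmetric] algebra_simps)
  have p4: "t^(c+d+3*c+2) = t^d * t^(4*c) * t^2" by (simp add: power_add[symmetric] algebra_simps)
  have p5: "k^(2*c+1) = k^(2*c) * k" by simp
  have p6: "x^(4*c+2) = x^(4*c) * x^2" "t^(4*c+2) = t^(4*c) * t^2" by (simp_all add: power_add power2_eq_square)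
  have xd: "(x^4)^d = x^(4*d)" by (simp add: power_mult)
  have fp: "fact (2*c) > (0::real)" "fact d > (0::real)" "fact (2*c+1) > (0::real)" by simp_all
  show ?thesis unfolding j e1 e2 p1 p2 p3 p4 p5 p6 \<open>(t*x^4)^d = t^d * x^(4*d)\<close> diff_add_inverse
    by (rule alg_aux) (use fp in auto)
qed

lemma GG_sums:
  fixes t k x :: real
  shows "(\<lambda>j. GG n t k j x) sums (x^(2*n) * exp (-(x^6)) * exp (t*x^4 - k*t^2*x^2))"
proof -
  define u where "u = t*x^4"
  define v where "v = -(k*t^2*x^2)"
  define a where "a = (\<lambda>i. u^i / fact i)"
  define b where "b = (\<lambda>c. v^(2*c) / fact (2*c) + v^(2*c+1) / fact (2*c+1))"
  have sa: "summable (\<lambda>i. norm (a i))"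
  proof -
    have "(\<lambda>i. \<bar>u\<bar>^i /\<^sub>R fact i) sums exp \<bar>u\<bar>" by (rule exp_converges)
    hence "summable (\<lambda>i. \<bar>u\<bar>^i /\<^sub>R fact i)" by (rule sums_summable)
    thus ?thesis unfolding a_def by (simp add: power_abs divide_inverse mult.commute abs_mult)
  qed
  have sb: "summable (\<lambda>c. norm (b c))"
  proof (rule summable_comparison_test)
    show "summable (\<lambda>c. \<bar>v\<bar>^(2*c) / fact (2*c) + \<bar>v\<bar>^(2*c+1) / fact (2*c+1))"
      using exp_pair_sums by (rule sums_summable)
    show "\<exists>N. \<forall>c\<ge>N. norm (norm (b c)) \<le> \<bar>v\<bar>^(2*c) / fact (2*c) + \<bar>v\<bar>^(2*c+1) / fact (2*c+1)"
      unfolding b_def by (auto intro!: exI[of _ 0] order.trans[OF abs_triangle_ineq] simp: power_abs abs_mult)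
  qed
  have "(\<lambda>j. \<Sum>c\<le>j. b c * a (j - c)) sums ((\<Sum>c. b c) * (\<Sum>i. a i))"
    by (rule Cauchy_product_sums[OF sb sa])
  moreover have "(\<Sum>c. b c) = exp v" unfolding b_def using exp_pair_sums by (simp add: sums_iff)
  moreover have "(\<Sum>i. a i) = exp u" unfolding a_def using exp_converges[of u]
    by (simp add: sums_iff divide_inverse mult.commute)
  ultimately have "(\<lambda>j. \<Sum>c\<le>j. b c * a (j - c)) sums (exp v * exp u)" by simp
  hence "(\<lambda>j. (\<Sum>c\<le>j. b c * a (j - c)) * (x^(2*n) * exp (-(x^6)))) sums (exp v * exp u * (x^(2*n) * exp (-(x^6))))"
    by (rule sums_mult2)
  moreover have "(\<Sum>c\<le>j. b c * a (j - c)) * (x^(2*n) * exp (-(x^6))) = GG n t k j x" for j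
  proof -
    have "(\<Sum>c\<le>j. b c * a (j - c)) * (x^(2*n) * exp (-(x^6))) = (\<Sum>c\<le>j. b c * a (j - c) * (x^(2*n) * exp (-(x^6))))"
      by (simp add: sum_distrib_right)
    also have "\<dots> = (\<Sum>c\<le>j. t^(j+3*c) * k^(2*c) / (fact (j-c) * fact (2*c)) * (x^(2*(n+2*j)) * exp (-(x^6)))
     - t^(j+3*c+2) * k^(2*c+1) / (fact (j-c) * fact (2*c+1)) * (x^(2*(n+2*j+1)) * exp (-(x^6))))"
      unfolding a_def b_def u_def v_def by (rule sum.cong[OF refl], rule term_eq) simp
    also have "\<dots> = GG n t k j x"
      unfolding GG_def PP_def QQ_def by (simp add: sum_subtractf sum_distrib_right)
    finally show ?thesis .
  qed
  moreover have "exp v * exp u * (x^(2*n) * exp (-(x^6))) = x^(2*n) * exp (-(x^6)) * exp (t*x^4 - k*t^2*x^2)"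
    unfolding u_def v_def by (simp add: exp_add[symmetric] algebra_simps)
  ultimately show ?thesis by simp
qed


lemma GG_int:
  shows "integrable lborel (GG n t k j)"
    and "integral\<^sup>L lborel (GG n t k j) = PP t k j * (Gamma ((2*real (n+2*j)+1)/6) / 3) + QQ t k j * (Gamma ((2*real (n+2*j+1)+1)/6) / 3)"
proof -
  note m1 = mom[of "n+2*j"] and m2 = mom[of "n+2*j+1"]
  have i1: "integrable lborel (\<lambda>x. PP t k j * (x^(2*(n+2*j)) * exp (-(x^6))))"
    using m1(1) by (rule integrable_mult_right)
  have i2: "integrable lborel (\<lambda>x. QQ t k j * (x^(2*(n+2*j+1)) * exp (-(x^6))))"
    using m2(1) by (rule integrable_mult_right)
  show "integrable lborel (GG n t k j)" unfolding GG_def[abs_def] using i1 i2 by simp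
  show "integral\<^sup>L lborel (GG n t k j) = PP t k j * (Gamma ((2*real (n+2*j)+1)/6) / 3) + QQ t k j * (Gamma ((2*real (n+2*j+1)+1)/6) / 3)"
  proof -
    have "integral\<^sup>L lborel (GG n t k j) = integral\<^sup>L lborel (\<lambda>x. PP t k j * (x^(2*(n+2*j)) * exp (-(x^6))))
       + integral\<^sup>L lborel (\<lambda>x. QQ t k j * (x^(2*(n+2*j+1)) * exp (-(x^6))))"
      unfolding GG_def[abs_def] by (rule Bochner_Integration.integral_add[OF i1 i2])
    also have "\<dots> = PP t k j * (Gamma ((2*real (n+2*j)+1)/6) / 3) + QQ t k j * (Gamma ((2*real (n+2*j+1)+1)/6) / 3)"
      by (simp only: integral_mult_right_zero m1(2) m2(2))
    finally show ?thesis .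
  qed
qed

lemma ev_nonneg: "0 \<le> (x::real)^(2*m)"
  by (simp add: power_mult)

lemma PP_abs: "\<bar>PP t k j\<bar> \<le> PP \<bar>t\<bar> (-\<bar>k\<bar>) j"
  unfolding PP_def
  by (rule order.trans[OF sum_abs]) (simp add: abs_mult power_abs power_mult_distrib)

lemma QQ_abs: "\<bar>QQ t k j\<bar> \<le> QQ \<bar>t\<bar> (-\<bar>k\<bar>) j"
  unfolding QQ_def
  by (simp only: abs_minus_cancel, rule order.trans[OF sum_abs]) (simp add: abs_mult power_abs power_mult_distrib sum_negf)

lemma PP_nonneg: "PP \<bar>t\<bar> (-\<bar>k\<bar>) j \<ge> 0"
  unfolding PP_def by (intro sum_nonneg) (simp add: power_mult_distrib)

lemma QQ_nonneg: "QQ \<bar>t\<bar> (-\<bar>k\<bar>) j \<ge> 0"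
  unfolding QQ_def by (simp add: sum_negf[symmetric] power_mult_distrib) (intro sum_nonneg, simp)

lemma GG_abs: "\<bar>GG n t k j x\<bar> \<le> GG n \<bar>t\<bar> (-\<bar>k\<bar>) j x"
proof -
  have a: "0 \<le> x^(2*(n+2*j)) * exp (-(x^6))" "0 \<le> x^(2*(n+2*j+1)) * exp (-(x^6))"
    by (intro mult_nonneg_nonneg ev_nonneg; simp)+
  have "\<bar>GG n t k j x\<bar> \<le> \<bar>PP t k j\<bar> * (x^(2*(n+2*j)) * exp (-(x^6))) + \<bar>QQ t k j\<bar> * (x^(2*(n+2*j+1)) * exp (-(x^6)))"
  proof -
    have "\<bar>GG n t k j x\<bar> \<le> \<bar>PP t k j * (x^(2*(n+2*j)) * exp (-(x^6)))\<bar> + \<bar>QQ t k j * (x^(2*(n+2*j+1)) * exp (-(x^6)))\<bar>"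
      unfolding GG_def by (rule abs_triangle_ineq)
    also have "\<dots> = \<bar>PP t k j\<bar> * (x^(2*(n+2*j)) * exp (-(x^6))) + \<bar>QQ t k j\<bar> * (x^(2*(n+2*j+1)) * exp (-(x^6)))"
      using a by (simp only: abs_mult[of "PP t k j"] abs_mult[of "QQ t k j"] abs_of_nonneg)
    finally show ?thesis .
  qed
  also have "\<dots> \<le> GG n \<bar>t\<bar> (-\<bar>k\<bar>) j x"
    unfolding GG_def using a PP_abs QQ_abs by (intro add_mono mult_right_mono) auto
  finally show ?thesis .
qed

lemma GG_nonneg: "GG n \<bar>t\<bar> (-\<bar>k\<bar>) j x \<ge> 0"
  unfolding GG_def using PP_nonneg QQ_nonneg by (intro add_nonneg_nonneg mult_nonneg_nonneg ev_nonneg; simp)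



lemma poly_bound1:
  fixes a y :: real assumes y: "y \<ge> 0" and a: "a \<ge> 0"
  shows "a*y^2 \<le> y^3/4 + 16*a^3"
proof (cases "y \<le> 4*a")
  case True
  have "y^2 \<le> (4*a)^2" using True y by (intro power_mono) auto
  hence "a*y^2 \<le> a*(4*a)^2" using a by (rule mult_left_mono)
  moreover have "a*(4*a)^2 = 16*a^3" by (simp add: power2_eq_square power3_eq_cube)
  moreover have "0 \<le> y^3" using y by simp
  ultimately show ?thesis by linarith
next
  case False
  hence "a \<le> y/4" by simp
  hence "a*y^2 \<le> (y/4)*y^2" by (rule mult_right_mono) simp
  moreover have "(y/4)*y^2 = y^3/4" by (simp add: power2_eq_square power3_eq_cube)
  moreover have "0 \<le> a^3" using a by simp
  ultimately show ?thesis by linarith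
qed

lemma poly_bound2:
  fixes b y :: real assumes y: "y \<ge> 0" and b: "b \<ge> 0"
  shows "b*y \<le> y^3/4 + b*(1+4*b)"
proof (cases "y \<le> 1+4*b")
  case True
  hence "b*y \<le> b*(1+4*b)" using b by (rule mult_left_mono)
  moreover have "0 \<le> y^3" using y by simp
  ultimately show ?thesis by linarith
next
  case False
  hence y1: "y \<ge> 1" "y \<ge> 4*b" using b by auto
  have "y*1 \<le> y*y" using y1 y by (intro mult_left_mono) auto
  hence "4*b \<le> y^2" using False by (simp add: power2_eq_square)
  hence "y*(4*b) \<le> y*y^2" using y by (rule mult_left_mono)
  moreover have "y*y^2 = y^3" by (simp add: power2_eq_square power3_eq_cube)
  moreover have "0 \<le> b*(1+4*b)" using b by simp
  ultimately show ?thesis by (simp add: algebra_simps)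
qed

lemma H_int:
  fixes a b :: real assumes a: "a \<ge> 0" and b: "b \<ge> 0"
  shows "integrable lborel (\<lambda>x. x^(2*n) * exp (-(x^6)) * exp (a*x^4 + b*x^2))"
proof -
  define c :: real where "c = 2 powr (-1/6)"
  have c0: "c > 0" unfolding c_def by simp
  have c6: "c^6 = 1/2"
  proof -
    have "c^6 = c powr (real 6)" using c0 by (simp only: powr_realpow)
    also have "\<dots> = 2 powr (-1/6 * 6)" unfolding c_def by (simp only: powr_powr of_nat_numeral)
    also have "\<dots> = 1/2" by (simp add: powr_minus_divide)
    finally show ?thesis .
  qed
  define F where "F = (\<lambda>x::real. x^(2*n) * exp (-(x^6)))"
  have iF: "integrable lborel (\<lambda>x. F (0 + c * x))"
    using lborel_integrable_real_affine_iff[of c F 0] c0 mom(1)[of n] unfolding F_def by simp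
  define C0 where "C0 = 16*a^3 + b*(1+4*b)"
  have iG: "integrable lborel (\<lambda>x. (exp C0 / c^(2*n)) * F (0 + c * x))"
    using iF by (rule integrable_mult_right)
  show ?thesis
  proof (rule Bochner_Integration.integrable_bound[OF iG])
    show "(\<lambda>x. x^(2*n) * exp (-(x^6)) * exp (a*x^4 + b*x^2)) \<in> borel_measurable lborel"
      by measurable
    show "AE x in lborel. norm (x^(2*n) * exp (-(x^6)) * exp (a*x^4 + b*x^2)) \<le> norm ((exp C0 / c^(2*n)) * F (0 + c * x))"
    proof (rule AE_I2)
      fix x :: real
      have y: "x^2 \<ge> 0" by simp
      have pb: "a*x^4 + b*x^2 \<le> x^6/2 + C0"
        using poly_bound1[OF y a] poly_bound2[OF y b] unfolding C0_def
        by (simp add: power_mult[symmetric])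
      have "exp (-(x^6)) * exp (a*x^4 + b*x^2) = exp (-(x^6) + (a*x^4 + b*x^2))" by (rule exp_add[symmetric])
      also have "\<dots> \<le> exp (C0 + (-(x^6)/2))" by (simp only: exp_le_cancel_iff) (use pb in linarith)
      also have "\<dots> = exp C0 * exp (-(x^6)/2)" by (rule exp_add)
      finally have e: "exp (-(x^6)) * exp (a*x^4 + b*x^2) \<le> exp C0 * exp (-(x^6)/2)" .
      have h1: "(c*x)^6 = x^6/2" by (simp only: power_mult_distrib c6)
      have h2: "(c*x)^(2*n) = c^(2*n) * x^(2*n)" by (rule power_mult_distrib)
      have Fc: "F (0 + c*x) = c^(2*n) * (x^(2*n) * exp (-(x^6)/2))"
        by (simp only: F_def add_0 h1 h2) simp
      have "norm (x^(2*n) * exp (-(x^6)) * exp (a*x^4 + b*x^2)) = x^(2*n) * (exp (-(x^6)) * exp (a*x^4 + b*x^2))"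
        using ev_nonneg[of x n] by simp
      also have "\<dots> \<le> x^(2*n) * (exp C0 * exp (-(x^6)/2))"
        using e ev_nonneg[of x n] by (rule mult_left_mono)
      also have "\<dots> = (exp C0 / c^(2*n)) * F (0 + c * x)"
        unfolding Fc using c0 by simp
      also have "\<dots> \<le> norm ((exp C0 / c^(2*n)) * F (0 + c * x))" by (metis real_norm_def abs_ge_self)
      finally show "norm (x^(2*n) * exp (-(x^6)) * exp (a*x^4 + b*x^2)) \<le> norm ((exp C0 / c^(2*n)) * F (0 + c * x))" .
    qed
  qed
qed



theorem theorem6p12:
  fixes \<tau> \<kappa> :: real and n :: nat
  defines "\<zeta> \<equiv> -(1/4) * \<kappa>^2 * \<tau>^3"
  shows "(\<lambda>j. (1/3) * (Gamma (2/3 * real j + real n / 3 + 1/6) / pochhammer (1/2) j * \<tau>^j * laguerre j (-1/2) \<zeta>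
            - \<kappa> * Gamma (2/3 * real j + real n / 3 + 1/2) / pochhammer (3/2) j * \<tau>^(j+2) * laguerre j (1/2) \<zeta>))
         sums mu n \<tau> \<kappa>"
proof -
  define f where "f = (\<lambda>x::real. x^(2*n) * exp (-(x^6 - \<tau>*x^4 + \<kappa>*\<tau>^2*x^2)))"
  define H where "H = (\<lambda>x::real. x^(2*n) * exp (-(x^6)) * exp (\<bar>\<tau>\<bar>*x^4 + (\<bar>\<kappa>\<bar>*\<bar>\<tau>\<bar>^2)*x^2))"
  define g where "g = (\<lambda>j x. GG n \<tau> \<kappa> j x)"
  define h where "h = (\<lambda>j x. GG n \<bar>\<tau>\<bar> (-\<bar>\<kappa>\<bar>) j x)"
  have pw: "(\<lambda>j. g j x) sums f x" for x
  proof -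
    have "x^(2*n) * exp (-(x^6)) * exp (\<tau>*x^4 - \<kappa>*\<tau>^2*x^2) = f x"
      unfolding f_def by (simp add: mult.assoc exp_add[symmetric])
    thus ?thesis using GG_sums[of n \<tau> \<kappa> x] unfolding g_def by simp
  qed
  have pwA: "(\<lambda>j. h j x) sums H x" for x
  proof -
    have "x^(2*n) * exp (-(x^6)) * exp (\<bar>\<tau>\<bar>*x^4 - (-\<bar>\<kappa>\<bar>)*\<bar>\<tau>\<bar>^2*x^2) = H x"
      unfolding H_def by simp
    thus ?thesis using GG_sums[of n "\<bar>\<tau>\<bar>" "-\<bar>\<kappa>\<bar>" x] unfolding h_def by simp
  qed
  have iH: "integrable lborel H" unfolding H_def by (rule H_int) simp_all
  have ig: "integrable lborel (g j)" for j unfolding g_def using GG_int(1) by (simp add: eta_contract_eq)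
  have ih: "integrable lborel (h j)" for j unfolding h_def using GG_int(1) by (simp add: eta_contract_eq)
  have h0: "0 \<le> h j x" for j x unfolding h_def by (rule GG_nonneg)
  have gh: "\<bar>g j x\<bar> \<le> h j x" for j x unfolding g_def h_def by (rule GG_abs)
  have sumA: "summable (\<lambda>j. integral\<^sup>L lborel (h j))"
  proof (rule summableI_nonneg_bounded)
    show "0 \<le> integral\<^sup>L lborel (h j)" for j using h0 by (simp add: integral_nonneg)
    show "(\<Sum>i<N. integral\<^sup>L lborel (h i)) \<le> integral\<^sup>L lborel H" for N
    proof -
      have "(\<Sum>i<N. integral\<^sup>L lborel (h i)) = integral\<^sup>L lborel (\<lambda>x. \<Sum>i<N. h i x)"
        using ih by (simp add: Bochner_Integration.integral_sum)
      also have "\<dots> \<le> integral\<^sup>L lborel H"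
      proof (rule integral_mono)
        show "integrable lborel (\<lambda>x. \<Sum>i<N. h i x)" using ih by simp
        show "integrable lborel H" by (rule iH)
        show "(\<Sum>i<N. h i x) \<le> H x" for x
          using sum_le_suminf[OF sums_summable[OF pwA[of x]], of "{..<N}"] h0 sums_unique[OF pwA[of x]]
          by simp
      qed
      finally show ?thesis .
    qed
  qed
  have sumN: "summable (\<lambda>j. \<integral>x. norm (g j x) \<partial>lborel)"
  proof (rule summable_comparison_test[OF _ sumA])
    show "\<exists>N. \<forall>j\<ge>N. norm (\<integral>x. norm (g j x) \<partial>lborel) \<le> integral\<^sup>L lborel (h j)"
    proof (intro exI allI impI)
      fix j :: nat
      have "(\<integral>x. norm (g j x) \<partial>lborel) \<le> integral\<^sup>L lborel (h j)"
        using gh ig ih by (intro integral_mono) auto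
      moreover have "0 \<le> (\<integral>x. norm (g j x) \<partial>lborel)" by simp
      ultimately show "norm (\<integral>x. norm (g j x) \<partial>lborel) \<le> integral\<^sup>L lborel (h j)" by simp
    qed
  qed
  have aes: "AE x in lborel. summable (\<lambda>j. norm (g j x))"
  proof (rule AE_I2)
    fix x :: real
    show "summable (\<lambda>j. norm (g j x))"
      by (rule summable_comparison_test[OF _ sums_summable[OF pwA[of x]]]) (use gh in auto)
  qed
  have S: "(\<lambda>j. integral\<^sup>L lborel (g j)) sums (\<integral>x. (\<Sum>j. g j x) \<partial>lborel)"
    and I: "integrable lborel (\<lambda>x. \<Sum>j. g j x)"
    using sums_integral[OF ig aes sumN] integrable_suminf[OF ig aes sumN] by auto
  have fe: "(\<lambda>x. \<Sum>j. g j x) = f" using pw by (auto simp: sums_iff)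
  have mu: "mu n \<tau> \<kappa> = integral\<^sup>L lborel f"
    unfolding mu_def f_def[symmetric] using I fe by (simp add: integral_lborel)
  have tm: "(1/3) * (Gamma (2/3 * real j + real n / 3 + 1/6) / pochhammer (1/2) j * \<tau>^j * laguerre j (-1/2) \<zeta>
            - \<kappa> * Gamma (2/3 * real j + real n / 3 + 1/2) / pochhammer (3/2) j * \<tau>^(j+2) * laguerre j (1/2) \<zeta>)
          = integral\<^sup>L lborel (g j)" for j
  proof -
    have a1: "2/3 * real j + real n / 3 + 1/6 = (2*real (n+2*j)+1)/6" by (simp add: field_simps)
    have a2: "2/3 * real j + real n / 3 + 1/2 = (2*real (n+2*j+1)+1)/6" by (simp add: field_simps)
    have "integral\<^sup>L lborel (g j) = PP \<tau> \<kappa> j * (Gamma ((2*real (n+2*j)+1)/6) / 3) + QQ \<tau> \<kappa> j * (Gamma ((2*real (n+2*j+1)+1)/6) / 3)"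
      unfolding g_def using GG_int(2) by (simp add: eta_contract_eq)
    also have "\<dots> = (1/3) * (Gamma (2/3 * real j + real n / 3 + 1/6) * (\<tau>^j * laguerre j (-1/2) \<zeta> / pochhammer (1/2) j)
            + Gamma (2/3 * real j + real n / 3 + 1/2) * (- \<kappa> * \<tau>^(j+2) * laguerre j (1/2) \<zeta> / pochhammer (3/2) j))"
      unfolding a1 a2 \<zeta>_def lag1 lag2 by (simp add: algebra_simps)
    finally show ?thesis by (simp add: algebra_simps)
  qed
  show ?thesis unfolding tm mu using S fe by simp
qed

end
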